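(* For the FSPG iterates $(\mathbf{w}^{(k)})$, for every $k\ge0$, $$\Big\|\nabla\sum_{l=1}^L\tilde g_l(\mathbf{w}^{(k+1)},\mu^{(k+2)})-\nabla\sum_{l=1}^L\tilde g_l(\mathbf{w}^{(k)},\mu^{(k+1)})\Big\|_2\le\frac{\lambda_{\max}(\bar{\mathbf{X}}^\top\bar{\mathbf{X}})}{2\mu^{(k+1)}}\|\mathbf{w}^{(k+1)}-\mathbf{w}^{(k)}\|_2+\frac{n\sqrt{\lambda_{\max}(\bar{\mathbf{X}}^\top\bar{\mathbf{X}})}}{2}\cdot\frac{\mu^{(k+1)}-\mu^{(k+2)}}{\mu^{(k+2)}},$$ where $\nabla$ denotes the gradient with respect to $\mathbf{w}$.
   Context: Data: $L$ clients; client $l$ holds $y^{(l)}_1,\dots,y^{(l)}_{M_l}\in\mathbb{R}$ and $\bar{\mathbf{x}}^{(l)}_i=[(\mathbf{x}^{(l)}_i)^\top,1]^\top\in\mathbb{R}^{P+1}$; $n=\sum_l M_l$; $\bar{\mathbf{X}}\in\mathbb{R}^{(P+1)\times n}$ has all $\bar{\mathbf{x}}^{(l)}_i$ as columns; $\lambda_{\max}$ is the largest eigenvalue. Quantile level $\tau\in(0,1)$. Smoothing: $f(r,\mu)=|r|$ if $|r|\ge\mu$, $f(r,\mu)=\frac{r^2}{2\mu}+\frac{\mu}{2}$ if $|r|<\mu$; $\tilde g_l(\mathbf{w},\mu)=\frac12\sum_{i} f(y^{(l)}_i-(\bar{\mathbf{x}}^{(l)}_i)^\top\mathbf{w},\mu)+(\tau-\frac12)\sum_i(y^{(l)}_i-(\bar{\mathbf{x}}^{(l)}_i)^\top\mathbf{w})$.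 Penalty: $\lambda>0$, $P_{\lambda,\gamma}(\mathbf{w})=\sum_{p=1}^{P}g_{\lambda,\gamma}(w_p)$ with $g_{\lambda,\gamma}$ either MCP ($\gamma\ge1$): $\lambda|t|-\frac{t^2}{2\gamma}$ for $|t|\le\gamma\lambda$, $\frac{\gamma\lambda^2}{2}$ otherwise; or SCAD ($\gamma\ge2$): $\lambda|t|$ for $|t|\le\lambda$, $-\frac{t^2-2\gamma\lambda|t|+\lambda^2}{2(\gamma-1)}$ for $\lambda<|t|\le\gamma\lambda$, $\frac{(\gamma+1)\lambda^2}{2}$ for $|t|>\gamma\lambda$. FSPG algorithm: choose $\mathbf{w}^{(0)}\in\mathbb{R}^{P+1}$, $c>0$, $\beta>0$, $d\in(0,1)$; set $\sigma^{(k)}=ck^d$ and $\mu^{(k)}=\beta/k^d$ for $k\ge1$; for $k=0,1,2,\dots$ let $\mathbf{w}^{(k+1)}$ be a minimizer over $\mathbf{w}\in\mathbb{R}^{P+1}$ of $\sum_{l=1}^L\langle\nabla_{\mathbf{w}}\tilde g_l(\mathbf{w}^{(k)},\mu^{(k+1)}),\mathbf{w}-\mathbf{w}^{(k)}\rangle+nP_{\lambda,\gamma}(\mathbf{w})+\frac{\sigma^{(k+1)}}{2}\|\mathbf{w}-\mathbf{w}^{(k)}\|_2^2$. *)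

theory Defs
  imports "HOL-Analysis.Analysis"
begin

definition fsm :: "real \<Rightarrow> real \<Rightarrow> real" where
  "fsm r mu = (if \<bar>r\<bar> \<ge> mu then \<bar>r\<bar> else r\<^sup>2 / (2 * mu) + mu / 2)"

text \<open>Local smoothed quantile loss of client l. Client l holds samples i = 1..M l,
  responses y l i and augmented covariates xb l i (a vector of dimension P+1).\<close>
definition gtil :: "(nat \<Rightarrow> nat) \<Rightarrow> (nat \<Rightarrow> nat \<Rightarrow> real) \<Rightarrow> (nat \<Rightarrow> nat \<Rightarrow> real ^ 'd)
    \<Rightarrow> real \<Rightarrow> nat \<Rightarrow> real ^ 'd \<Rightarrow> real \<Rightarrow> real" where
  "gtil M y xb tau l w mu =
     (1/2) * (\<Sum>i\<in>{1..M l}. fsm (y l i - xb l i \<bullet> w) mu)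
     + (tau - 1/2) * (\<Sum>i\<in>{1..M l}. (y l i - xb l i \<bullet> w))"

definition grad :: "('a::real_inner \<Rightarrow> real) \<Rightarrow> 'a \<Rightarrow> 'a" where
  "grad f x = (THE D. GDERIV f x :> D)"

definition mcp :: "real \<Rightarrow> real \<Rightarrow> real \<Rightarrow> real" where
  "mcp lam gam t = (if \<bar>t\<bar> \<le> gam * lam then lam * \<bar>t\<bar> - t\<^sup>2 / (2 * gam) else gam * lam\<^sup>2 / 2)"

definition scad :: "real \<Rightarrow> real \<Rightarrow> real \<Rightarrow> real" where
  "scad lam gam t = (if \<bar>t\<bar> \<le> lam then lam * \<bar>t\<bar>
      else if \<bar>t\<bar> \<le> gam * lam then - (t\<^sup>2 - 2 * gam * lam * \<bar>t\<bar> + lam\<^sup>2) / (2 * (gam - 1))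
      else (gam + 1) * lam\<^sup>2 / 2)"

definition penalty :: "(real \<Rightarrow> real) \<Rightarrow> 'd \<Rightarrow> real ^ ('d::finite) \<Rightarrow> real" where
  "penalty g ic w = (\<Sum>p\<in>UNIV - {ic}. g (w $ p))"

definition is_eigenvalue :: "nat \<Rightarrow> (nat \<Rightarrow> nat \<Rightarrow> real) \<Rightarrow> real \<Rightarrow> bool" where
  "is_eigenvalue n A lam \<longleftrightarrow>
     (\<exists>v::nat \<Rightarrow> real. (\<exists>i<n. v i \<noteq> 0) \<and> (\<forall>i<n. (\<Sum>j<n. A i j * v j) = lam * v i))"

definition lambda_max :: "nat \<Rightarrow> (nat \<Rightarrow> nat \<Rightarrow> real) \<Rightarrow> real" where
  "lambda_max n A = Max {lam. is_eigenvalue n A lam}"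

text \<open>Columns of Xbar: all samples of clients 1..L in order; Gram matrix Xbar^T Xbar.\<close>
definition samples :: "nat \<Rightarrow> (nat \<Rightarrow> nat) \<Rightarrow> (nat \<Rightarrow> nat \<Rightarrow> 'a) \<Rightarrow> 'a list" where
  "samples L M xb = concat (map (\<lambda>l. map (\<lambda>i. xb l i) [1..<M l + 1]) [1..<L + 1])"

definition gram :: "nat \<Rightarrow> (nat \<Rightarrow> nat) \<Rightarrow> (nat \<Rightarrow> nat \<Rightarrow> real ^ 'd) \<Rightarrow> nat \<Rightarrow> nat \<Rightarrow> real" where
  "gram L M xb i j = samples L M xb ! i \<bullet> samples L M xb ! j"

end

theory Submission
  imports Defs
begin
definition psi :: "real \<Rightarrow> real \<Rightarrow> real" where
  "psi r mu = (if \<bar>r\<bar> \<ge> mu then sgn r else r / mu)"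

lemma fsm_bound_aux:
  fixes a b mu :: real
  assumes mu: "mu > 0"
  shows "\<bar>(fsm b mu - fsm a mu - psi a mu * (b - a)) * mu\<bar> \<le> (b - a)\<^sup>2"
proof -
  have m: "\<And>x. x / (2*mu) * mu = x/2" "\<And>x. x / mu * mu = x" using mu by auto
  consider "a \<ge> mu" | "a \<le> -mu" | "\<bar>a\<bar> < mu" by linarith
  then show ?thesis
  proof cases
    case 1
    consider "b \<ge> mu" | "b \<le> -mu" | "\<bar>b\<bar> < mu" by linarith
    then show ?thesis
    proof cases
      case 1 with \<open>a \<ge> mu\<close> mu show ?thesis by (simp add: fsm_def psi_def)
    next
      case 2
      have "(-b) * (2*mu) \<le> (a-b) * (a-b)" using mu 2 \<open>a \<ge> mu\<close>
        by (intro mult_mono) auto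
      moreover have "(fsm b mu - fsm a mu - psi a mu * (b - a)) * mu = (-b) * (2*mu)"
        using 2 \<open>a \<ge> mu\<close> mu by (simp add: fsm_def psi_def algebra_simps)
      moreover have "(-b) * (2*mu) \<ge> 0" using 2 mu by (intro mult_nonneg_nonneg) auto
      ultimately show ?thesis by (simp add: power2_eq_square algebra_simps)
    next
      case 3
      have e: "(fsm b mu - fsm a mu - psi a mu * (b - a)) * mu = (b-mu)^2/2"
        using 3 \<open>a \<ge> mu\<close> mu by (simp add: fsm_def psi_def power2_eq_square algebra_simps m)
      have "(b - mu)^2 \<le> (b-a)^2"
      proof -
        have "(mu-b)*(mu-b) \<le> (a-b)*(a-b)" using 3 \<open>a \<ge> mu\<close> by (intro mult_mono) auto
        thus ?thesis by (simp add: power2_eq_square algebra_simps)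
      qed
      then show ?thesis unfolding e abs_le_iff using zero_le_power2[of "b - mu"] zero_le_power2[of "b-a"] by linarith
    qed
  next
    case 2
    consider "b \<ge> mu" | "b \<le> -mu" | "\<bar>b\<bar> < mu" by linarith
    then show ?thesis
    proof cases
      case 2 with \<open>a \<le> -mu\<close> mu show ?thesis by (simp add: fsm_def psi_def)
    next
      case 1
      have "(b) * (2*mu) \<le> (b-a) * (b-a)" using mu 1 \<open>a \<le> -mu\<close>
        by (intro mult_mono) auto
      moreover have "(fsm b mu - fsm a mu - psi a mu * (b - a)) * mu = b * (2*mu)"
        using 1 \<open>a \<le> -mu\<close> mu by (simp add: fsm_def psi_def algebra_simps)
      moreover have "b * (2*mu) \<ge> 0" using 1 mu by (intro mult_nonneg_nonneg) auto
      ultimately show ?thesis by (simp add: power2_eq_square algebra_simps)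
    next
      case 3
      have e: "(fsm b mu - fsm a mu - psi a mu * (b - a)) * mu = (b+mu)^2/2"
        using 3 \<open>a \<le> -mu\<close> mu by (simp add: fsm_def psi_def power2_eq_square algebra_simps m)
      have "(b+mu)^2 \<le> (b-a)^2" using 3 \<open>a \<le> -mu\<close> unfolding power2_eq_square by (intro mult_mono) auto
      then show ?thesis unfolding e abs_le_iff using zero_le_power2[of "b+mu"] zero_le_power2[of "b-a"] by linarith
    qed
  next
    case 3
    consider "b \<ge> mu" | "b \<le> -mu" | "\<bar>b\<bar> < mu" by linarith
    then show ?thesis
    proof cases
      case 1
      have e: "(fsm b mu - fsm a mu - psi a mu * (b - a)) * mu = (b-a)^2/2 - (b-mu)^2/2"
        proof -
        have eqs: "psi a mu = a/mu" "fsm a mu = a^2/(2*mu)+mu/2" "fsm b mu = b" using 3 1 mu by (auto simp: psi_def fsm_def)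
        show ?thesis unfolding eqs using mu by (simp add: field_simps power2_eq_square)
      qed
      have "(b-mu)^2 \<le> (b-a)^2" using 3 1 unfolding power2_eq_square by (intro mult_mono) auto
      then show ?thesis unfolding e abs_le_iff using zero_le_power2[of "b-mu"] zero_le_power2[of "b-a"] by linarith
    next
      case 2
      have e: "(fsm b mu - fsm a mu - psi a mu * (b - a)) * mu = (b-a)^2/2 - (-b-mu)^2/2"
        proof -
        have eqs: "psi a mu = a/mu" "fsm a mu = a^2/(2*mu)+mu/2" "fsm b mu = -b" using 3 2 mu by (auto simp: psi_def fsm_def)
        show ?thesis unfolding eqs using mu by (simp add: field_simps power2_eq_square)
      qed
      have "(-b-mu)^2 \<le> (b-a)^2"
      proof -
        have "(-b-mu)*(-b-mu) \<le> (a-b)*(a-b)" using 3 2 by (intro mult_mono) auto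
        thus ?thesis by (simp add: power2_eq_square algebra_simps)
      qed
      then show ?thesis unfolding e abs_le_iff using zero_le_power2[of "-b-mu"] zero_le_power2[of "b-a"] by linarith
    next
      case 4: 3
      have e: "(fsm b mu - fsm a mu - psi a mu * (b - a)) * mu = (b-a)^2/2"
        proof -
        have eqs: "psi a mu = a/mu" "fsm a mu = a^2/(2*mu)+mu/2" "fsm b mu = b^2/(2*mu)+mu/2" using 3 4 mu by (auto simp: psi_def fsm_def)
        show ?thesis unfolding eqs using mu by (simp add: field_simps power2_eq_square)
      qed
      then show ?thesis unfolding e abs_le_iff using zero_le_power2[of "b-a"] by linarith
    qed
  qed
qed

lemma fsm_deriv:
  assumes mu: "mu > 0"
  shows "((\<lambda>r. fsm r mu) has_real_derivative psi r mu) (at r)"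
  unfolding DERIV_def
proof (rule LIM_zero_cancel, rule Lim_null_comparison)
  show "\<forall>\<^sub>F h in at 0. norm ((fsm (r + h) mu - fsm r mu) / h - psi r mu) \<le> \<bar>h\<bar> / mu"
  proof -
    have ev: "\<forall>\<^sub>F h in at (0::real). h \<noteq> 0" by (simp add: eventually_at_filter)
    show ?thesis
    proof (rule eventually_mono[OF ev])
      fix h :: real assume False: "h \<noteq> 0"
      have b: "\<bar>(fsm (r+h) mu - fsm r mu - psi r mu * h) * mu\<bar> \<le> h\<^sup>2"
        using fsm_bound_aux[OF mu, where a=r and b="r+h"] by simp
      have "(fsm (r + h) mu - fsm r mu) / h - psi r mu = (fsm (r+h) mu - fsm r mu - psi r mu * h) / h"
        using False by (simp add: field_simps)
      also have "norm \<dots> = \<bar>(fsm (r+h) mu - fsm r mu - psi r mu * h) * mu\<bar> / (\<bar>h\<bar> * mu)"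
        using mu by (simp add: abs_mult)
      also have "\<dots> \<le> h\<^sup>2 / (\<bar>h\<bar> * mu)"
        using b mu False by (intro divide_right_mono) auto
      also have "\<dots> = \<bar>h\<bar> / mu" using False mu by (simp add: power2_eq_square field_simps abs_mult_self_eq)
      finally show "norm ((fsm (r + h) mu - fsm r mu) / h - psi r mu) \<le> \<bar>h\<bar> / mu" .
    qed
  qed
  show "((\<lambda>h. \<bar>h\<bar> / mu) \<longlongrightarrow> 0) (at 0)"
  proof -
    have "((\<lambda>h. \<bar>h\<bar> / mu) \<longlongrightarrow> \<bar>0\<bar> / mu) (at (0::real))"
      using mu by (intro tendsto_intros) auto
    then show ?thesis by simp
  qed
qed

definition Gl :: "(nat \<Rightarrow> nat) \<Rightarrow> (nat \<Rightarrow> nat \<Rightarrow> real) \<Rightarrow> (nat \<Rightarrow> nat \<Rightarrow> real ^ 'd)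
    \<Rightarrow> real \<Rightarrow> nat \<Rightarrow> real ^ 'd \<Rightarrow> real \<Rightarrow> real ^ 'd" where
  "Gl M y xb tau l w mu = (\<Sum>i\<in>{1..M l}. (-(1/2) * psi (y l i - xb l i \<bullet> w) mu - (tau - 1/2)) *\<^sub>R xb l i)"

lemma gtil_gderiv:
  assumes mu: "mu > 0"
  shows "GDERIV (\<lambda>u. gtil M y xb tau l u mu) w :> Gl M y xb tau l w mu"
proof -
  have d: "((\<lambda>u. fsm (y l i - xb l i \<bullet> u) mu) has_derivative (\<lambda>h. (- (xb l i \<bullet> h)) * psi (y l i - xb l i \<bullet> w) mu)) (at w)" for i
    by (rule DERIV_compose_FDERIV[OF fsm_deriv[OF mu]]) (auto intro!: derivative_eq_intros)
  have "((\<lambda>u. gtil M y xb tau l u mu) has_derivative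
     (\<lambda>h. (1/2) * (\<Sum>i\<in>{1..M l}. (- (xb l i \<bullet> h)) * psi (y l i - xb l i \<bullet> w) mu)
        + (tau - 1/2) * (\<Sum>i\<in>{1..M l}. (0 - xb l i \<bullet> h)))) (at w)"
    unfolding gtil_def
    by (intro has_derivative_add has_derivative_mult_right has_derivative_sum d
        has_derivative_diff has_derivative_const has_derivative_inner_right has_derivative_ident)
  moreover have "(\<lambda>h. (1/2) * (\<Sum>i\<in>{1..M l}. (- (xb l i \<bullet> h)) * psi (y l i - xb l i \<bullet> w) mu)
        + (tau - 1/2) * (\<Sum>i\<in>{1..M l}. (0 - xb l i \<bullet> h))) = (\<lambda>h. h \<bullet> Gl M y xb tau l w mu)"
    by (rule ext) (simp add: Gl_def inner_sum_right sum_distrib_left sum_subtractf[symmetric]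
        sum.distrib[symmetric] algebra_simps inner_commute)
  ultimately show ?thesis unfolding gderiv_def by simp
qed
lemma quad_zero:
  fixes beta gamma :: real
  assumes "\<And>t. 2 * t * beta \<le> t\<^sup>2 * gamma" "gamma \<ge> 0"
  shows "beta = 0"
proof -
  define t where "t = beta / (gamma + 1)"
  have g1: "gamma + 1 > 0" using assms by simp
  have "2 * t * beta * (gamma+1)\<^sup>2 \<le> t\<^sup>2 * gamma * (gamma+1)\<^sup>2"
    by (rule mult_right_mono[OF assms(1)]) simp
  moreover have "2 * t * beta * (gamma+1)\<^sup>2 = 2 * beta * beta * (gamma + 1)"
    using g1 unfolding t_def by (simp add: field_simps power2_eq_square)
  moreover have "t\<^sup>2 * gamma * (gamma+1)\<^sup>2 = beta * beta * gamma"
  proof -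
    have tb: "t*(gamma+1) = beta" using g1 unfolding t_def by simp
    have "t\<^sup>2 * gamma * (gamma+1)\<^sup>2 = (t*(gamma+1)) * (t*(gamma+1)) * gamma"
      by (simp add: power2_eq_square algebra_simps)
    then show ?thesis unfolding tb .
  qed
  ultimately have "2 * beta * beta * (gamma + 1) \<le> beta * beta * gamma" by simp
  then have "beta * beta * (gamma + 2) \<le> 0" by (simp add: algebra_simps)
  moreover have "beta * beta \<ge> 0" by simp
  ultimately have "beta * beta = 0" using assms(2)
    by (auto simp: mult_le_0_iff)
  then show ?thesis by simp
qed

lemma rayleigh_max:
  fixes X :: "'i \<Rightarrow> 'a::euclidean_space"
  assumes fin: "finite I"
  shows "\<exists>v m. norm v = 1 \<and> (\<Sum>p\<in>I. (X p \<bullet> v) *\<^sub>R X p) = m *\<^sub>R v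
            \<and> (\<forall>z. (\<Sum>p\<in>I. (X p \<bullet> z)\<^sup>2) \<le> m * (norm z)\<^sup>2)"
proof -
  define q where "q z = (\<Sum>p\<in>I. (X p \<bullet> z)\<^sup>2)" for z
  define f where "f z = (\<Sum>p\<in>I. (X p \<bullet> z) *\<^sub>R X p)" for z
  have ne: "sphere (0::'a) 1 \<noteq> {}"
  proof -
    obtain b :: 'a where "b \<in> Basis" using nonempty_Basis by blast
    then show ?thesis by (auto simp: sphere_def intro!: exI[of _ b])
  qed
  have cont: "continuous_on (sphere 0 1) q" unfolding q_def
    by (intro continuous_intros)
  obtain v where v: "v \<in> sphere 0 1" and vmax: "\<And>z. z \<in> sphere 0 1 \<Longrightarrow> q z \<le> q v"
    using continuous_attains_sup[OF compact_sphere ne cont] by blast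
  define m where "m = q v"
  have qscale: "q (c *\<^sub>R z) = c\<^sup>2 * q z" for c z
    unfolding q_def by (simp add: sum_distrib_left power_mult_distrib algebra_simps)
  have qle: "q z \<le> m * (norm z)\<^sup>2" for z
  proof (cases "z = 0")
    case True then show ?thesis by (simp add: q_def)
  next
    case False
    have "q ((1 / norm z) *\<^sub>R z) \<le> m" unfolding m_def using False by (intro vmax) auto
    then have "(1 / norm z)\<^sup>2 * q z \<le> m" by (simp add: qscale)
    then show ?thesis using False by (simp add: field_simps power2_eq_square)
  qed
  have nv: "norm v = 1" using v by simp
  have "u \<bullet> (f v - m *\<^sub>R v) = 0" for u
  proof (rule quad_zero)
    show "m * (norm u)\<^sup>2 - q u \<ge> 0" using qle[of u] by simp
    fix t :: real
    have "q (v + t *\<^sub>R u) \<le> m * (norm (v + t *\<^sub>R u))\<^sup>2" by (rule qle)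
    moreover have "q (v + t *\<^sub>R u) = q v + 2 * t * (u \<bullet> f v) + t\<^sup>2 * q u"
      unfolding q_def f_def
      by (simp add: inner_add_right inner_sum_right power2_sum sum.distrib sum_distrib_left
           algebra_simps power_mult_distrib inner_commute)
    moreover have "(norm (v + t *\<^sub>R u))\<^sup>2 = 1 + 2 * t * (u \<bullet> v) + t\<^sup>2 * (norm u)\<^sup>2"
    proof -
      have vv: "v \<bullet> v = 1" using nv by (simp add: power2_norm_eq_inner[symmetric])
      show ?thesis unfolding power2_norm_eq_inner
        by (simp add: inner_add_left inner_add_right vv algebra_simps inner_commute power2_eq_square)
    qed
    ultimately show "2 * t * (u \<bullet> (f v - m *\<^sub>R v)) \<le> t\<^sup>2 * (m * (norm u)\<^sup>2 - q u)"
      unfolding m_def by (simp add: inner_diff_right algebra_simps)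
  qed
  then have "f v - m *\<^sub>R v = 0" by (metis inner_eq_zero_iff)
  then show ?thesis using nv qle unfolding f_def q_def by (intro exI[of _ v] exI[of _ m]) auto
qed

lemma norm_comb_bound:
  fixes X :: "'i \<Rightarrow> 'a::euclidean_space"
  assumes fin: "finite I" and m: "\<And>z. (\<Sum>p\<in>I. (X p \<bullet> z)\<^sup>2) \<le> m * (norm z)\<^sup>2"
  shows "norm (\<Sum>p\<in>I. d p *\<^sub>R X p) \<le> sqrt m * sqrt (\<Sum>p\<in>I. (d p)\<^sup>2)"
proof -
  define V where "V = (\<Sum>p\<in>I. d p *\<^sub>R X p)"
  have m0: "m \<ge> 0"
  proof (cases "\<exists>z::'a. z \<noteq> 0")
    case True
    then obtain z :: 'a where "z \<noteq> 0" by blast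
    have "0 \<le> (\<Sum>p\<in>I. (X p \<bullet> z)\<^sup>2)" by (intro sum_nonneg) auto
    also have "\<dots> \<le> m * (norm z)\<^sup>2" by (rule m)
    finally show ?thesis using \<open>z \<noteq> 0\<close> by (simp add: zero_le_mult_iff)
  next
    case False
    then show ?thesis using nonempty_Basis by (metis ex_in_conv nonzero_Basis)
  qed
  have "(norm V)\<^sup>2 = (\<Sum>p\<in>I. d p * (X p \<bullet> V))"
    unfolding power2_norm_eq_inner V_def[symmetric]
    by (subst (1) V_def) (simp add: inner_sum_left)
  also have "\<dots> \<le> (\<Sum>p\<in>I. \<bar>d p\<bar> * \<bar>X p \<bullet> V\<bar>)"
    by (intro sum_mono) (simp add: abs_mult[symmetric])
  also have "\<dots> \<le> L2_set d I * L2_set (\<lambda>p. X p \<bullet> V) I" by (rule L2_set_mult_ineq)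
  also have "L2_set (\<lambda>p. X p \<bullet> V) I \<le> sqrt (m * (norm V)\<^sup>2)"
    unfolding L2_set_def using m[of V] by simp
  also have "sqrt (m * (norm V)\<^sup>2) = sqrt m * norm V" by (simp add: real_sqrt_mult)
  finally have *: "(norm V)\<^sup>2 \<le> L2_set d I * (sqrt m * norm V)"
    by (simp add: mult_left_mono L2_set_nonneg)
  show ?thesis
  proof (cases "norm V = 0")
    case True then show ?thesis unfolding V_def[symmetric] by (simp add: m0 sum_nonneg)
  next
    case False
    then have "norm V \<le> L2_set d I * sqrt m" using * by (simp add: power2_eq_square)
    then show ?thesis unfolding V_def[symmetric] L2_set_def by (simp add: mult.commute)
  qed
qed


lemma eig_finite:
  fixes f :: "'a::euclidean_space \<Rightarrow> 'a"
  assumes sa: "\<And>z z'. f z \<bullet> z' = z \<bullet> f z'"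
  shows "finite {lam. \<exists>z. z \<noteq> 0 \<and> f z = lam *\<^sub>R z}"
proof -
  define E where "E = {lam. \<exists>z. z \<noteq> 0 \<and> f z = lam *\<^sub>R z}"
  define Z where "Z lam = (SOME z. z \<noteq> 0 \<and> f z = lam *\<^sub>R z)" for lam
  have Z: "Z lam \<noteq> 0 \<and> f (Z lam) = lam *\<^sub>R Z lam" if "lam \<in> E" for lam
  proof -
    have "\<exists>z. z \<noteq> 0 \<and> f z = lam *\<^sub>R z" using that unfolding E_def by blast
    from someI_ex[OF this] show ?thesis unfolding Z_def .
  qed
  have inj: "inj_on Z E"
  proof (rule inj_onI)
    fix a b assume a: "a \<in> E" and b: "b \<in> E" and eq: "Z a = Z b"
    have "a *\<^sub>R Z a = f (Z a)" using Z[OF a] by simp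
    also have "\<dots> = f (Z b)" by (simp only: eq)
    also have "\<dots> = b *\<^sub>R Z b" using Z[OF b] by simp
    also have "\<dots> = b *\<^sub>R Z a" by (simp only: eq)
    finally have "a *\<^sub>R Z a = b *\<^sub>R Z a" .
    then show "a = b" using Z[OF a] by simp
  qed
  have orth: "pairwise orthogonal (Z ` E)"
  proof (rule pairwiseI, clarify)
    fix a b assume a: "a \<in> E" and b: "b \<in> E" and ne: "Z a \<noteq> Z b"
    then have "a \<noteq> b" by auto
    have "a * (Z a \<bullet> Z b) = f (Z a) \<bullet> Z b" using Z[OF a] by simp
    also have "\<dots> = Z a \<bullet> f (Z b)" by (rule sa)
    also have "\<dots> = b * (Z a \<bullet> Z b)" using Z[OF b] by simp
    finally have "a * (Z a \<bullet> Z b) = b * (Z a \<bullet> Z b)" .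
    then have "(a - b) * (Z a \<bullet> Z b) = 0" by (simp add: algebra_simps)
    then show "orthogonal (Z a) (Z b)" using \<open>a \<noteq> b\<close> by (simp add: orthogonal_def)
  qed
  have "0 \<notin> Z ` E"
  proof
    assume "0 \<in> Z ` E"
    then obtain a where "a \<in> E" "Z a = 0" by (metis image_iff)
    with Z[OF \<open>a \<in> E\<close>] show False by simp
  qed
  then have "independent (Z ` E)" using orth by (intro pairwise_orthogonal_independent)
  from independent_bound[OF this] have "finite (Z ` E)" by simp
  from finite_imageD[OF this inj] show ?thesis unfolding E_def .
qed

lemma lam_ge:
  fixes s :: "'a::euclidean_space list" and v :: 'a
  defines "n \<equiv> length s"
  assumes n1: "n \<ge> 1"
    and mq: "\<And>z. (\<Sum>j<n. (s!j \<bullet> z)\<^sup>2) \<le> m * (norm z)\<^sup>2"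
    and ev: "(\<Sum>j<n. (s!j \<bullet> v) *\<^sub>R s!j) = m *\<^sub>R v" and nv: "norm v = 1"
  shows "m \<le> lambda_max n (\<lambda>i j. s!i \<bullet> s!j)"
proof -
  define G where "G = (\<lambda>i j. s!i \<bullet> s!j)"
  define f where "f z = (\<Sum>j<n. (s!j \<bullet> z) *\<^sub>R s!j)" for z
  define S where "S = {lam. is_eigenvalue n G lam}"
  have sa: "f z \<bullet> z' = z \<bullet> f z'" for z z'
    unfolding f_def by (simp add: inner_sum_left inner_sum_right mult.commute inner_commute)
  have Gf: "(\<Sum>j<n. G i j * u j) = s!i \<bullet> (\<Sum>j<n. u j *\<^sub>R s!j)" for i u
    unfolding G_def by (simp add: inner_sum_right mult.commute)
  have sub: "S \<subseteq> insert 0 {lam. \<exists>z. z \<noteq> 0 \<and> f z = lam *\<^sub>R z}"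
  proof
    fix lam assume "lam \<in> S"
    then obtain u where u: "\<exists>i<n. u i \<noteq> 0" and eu: "\<And>i. i < n \<Longrightarrow> (\<Sum>j<n. G i j * u j) = lam * u i"
      unfolding S_def is_eigenvalue_def by blast
    show "lam \<in> insert 0 {lam. \<exists>z. z \<noteq> 0 \<and> f z = lam *\<^sub>R z}"
    proof (cases "lam = 0")
      case False
      define z where "z = (\<Sum>j<n. u j *\<^sub>R s!j)"
      have sz: "s!i \<bullet> z = lam * u i" if "i < n" for i
        using eu[OF that] Gf[of i u] unfolding z_def by simp
      have "f z = (\<Sum>j<n. (lam * u j) *\<^sub>R s!j)" unfolding f_def by (intro sum.cong) (auto simp: sz)
      also have "\<dots> = lam *\<^sub>R z" unfolding z_def by (simp add: scaleR_sum_right)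
      finally have fz: "f z = lam *\<^sub>R z" .
      have "z \<noteq> 0"
      proof
        assume "z = 0"
        then have "lam * u i = 0" if "i < n" for i using sz[OF that] by simp
        then show False using u False by auto
      qed
      then show ?thesis using fz by blast
    qed simp
  qed
  have finS: "finite S"
    using sub eig_finite[of f, OF sa] by (meson finite_insert finite_subset)
  have mS: "m \<in> S"
  proof (cases "m = 0")
    case False
    define u where "u j = s!j \<bullet> v" for j
    have "(\<Sum>j<n. G i j * u j) = m * u i" for i
      using Gf[of i u] ev unfolding u_def by simp
    moreover have "\<exists>i<n. u i \<noteq> 0"
    proof (rule ccontr)
      assume "\<not> ?thesis"
      then have "(\<Sum>j<n. (s!j \<bullet> v) *\<^sub>R s!j) \<bullet> v = 0"
        unfolding u_def by (simp add: inner_sum_left)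
      then have "m * (v \<bullet> v) = 0" using ev by simp
      then show False using False nv by (simp add: power2_norm_eq_inner[symmetric])
    qed
    ultimately show ?thesis unfolding S_def is_eigenvalue_def by blast
  next
    case True
    have z: "s!j = 0" if "j < n" for j
    proof -
      have "(\<Sum>i<n. (s!i \<bullet> s!j)\<^sup>2) \<le> 0" using mq[of "s!j"] True by simp
      then have "(\<Sum>i<n. (s!i \<bullet> s!j)\<^sup>2) = 0" by (intro antisym sum_nonneg) auto
      then have "\<forall>i\<in>{..<n}. (s!i \<bullet> s!j)\<^sup>2 = 0"
        by (subst sum_nonneg_eq_0_iff[symmetric]) auto
      then have "(s!j \<bullet> s!j)\<^sup>2 = 0" using that by simp
      then show ?thesis by simp
    qed
    define u where "u j = (if j = 0 then 1 else (0::real))" for j :: nat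
    have "(\<Sum>j<n. G i j * u j) = m * u i" if "i < n" for i
      using that True unfolding G_def by (simp add: z)
    moreover have "\<exists>i<n. u i \<noteq> 0" using n1 unfolding u_def by (intro exI[of _ 0]) auto
    ultimately show ?thesis unfolding S_def is_eigenvalue_def by blast
  qed
  show ?thesis unfolding lambda_max_def G_def[symmetric] S_def[symmetric]
    using finS mS by simp
qed


lemma grad_eq:
  assumes "GDERIV f x :> D"
  shows "grad f x = D"
  unfolding grad_def
proof (rule the_equality)
  show "GDERIV f x :> D" by (rule assms)
  fix D' assume "GDERIV f x :> D'"
  then have "(\<lambda>h. h \<bullet> D') = (\<lambda>h. h \<bullet> D)"
    using assms unfolding gderiv_def by (rule has_derivative_unique)
  then have "(D' - D) \<bullet> D' = (D' - D) \<bullet> D" by metis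
  then have "(D' - D) \<bullet> (D' - D) = 0" by (simp add: inner_diff_right)
  then show "D' = D" by simp
qed

lemma grad_sum_gtil:
  assumes mu: "mu > 0"
  shows "grad (\<lambda>u. \<Sum>l\<in>{1..L}. gtil M y xb tau l u mu) w = (\<Sum>l\<in>{1..L}. Gl M y xb tau l w mu)"
proof (rule grad_eq)
  have "((\<lambda>u. \<Sum>l\<in>{1..L}. gtil M y xb tau l u mu) has_derivative
        (\<lambda>h. \<Sum>l\<in>{1..L}. h \<bullet> Gl M y xb tau l w mu)) (at w)"
    using gtil_gderiv[OF mu] unfolding gderiv_def by (intro has_derivative_sum) auto
  then show "GDERIV (\<lambda>u. \<Sum>l\<in>{1..L}. gtil M y xb tau l u mu) w :> (\<Sum>l\<in>{1..L}. Gl M y xb tau l w mu)"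
    unfolding gderiv_def by (simp add: inner_sum_right)
qed

lemma grad_gtil:
  assumes mu: "mu > 0"
  shows "grad (\<lambda>u. gtil M y xb tau l u mu) w = Gl M y xb tau l w mu"
  by (rule grad_eq[OF gtil_gderiv[OF mu]])

lemma sum_list_concat':
  "sum_list (concat xss) = sum_list (map sum_list (xss :: 'b::monoid_add list list))"
  by (induct xss) auto

lemma samples_sum:
  fixes g :: "'a \<Rightarrow> 'b::comm_monoid_add"
  shows "(\<Sum>j<length (samples L M xb). g (samples L M xb ! j)) = (\<Sum>l\<in>{1..L}. \<Sum>i\<in>{1..M l}. g (xb l i))"
proof -
  have "(\<Sum>j<length (samples L M xb). g (samples L M xb ! j)) = sum_list (map g (samples L M xb))"
    by (simp add: sum_list_sum_nth atLeast0LessThan)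
  also have "\<dots> = (\<Sum>l\<in>{1..L}. \<Sum>i\<in>{1..M l}. g (xb l i))"
  proof -
    have inner: "sum_list (map g (map (\<lambda>i. xb l i) [1..<M l + 1])) = (\<Sum>i\<in>{1..M l}. g (xb l i))" for l
      by (simp add: sum_list_distinct_conv_sum_set atLeastLessThanSuc_atLeastAtMost del: upt_Suc)
    have "sum_list (map g (samples L M xb))
        = sum_list (map (\<lambda>l. sum_list (map g (map (\<lambda>i. xb l i) [1..<M l + 1]))) [1..<L + 1])"
      unfolding samples_def map_concat sum_list_concat' map_map comp_def ..
    also have "\<dots> = (\<Sum>l\<in>{1..L}. \<Sum>i\<in>{1..M l}. g (xb l i))"
      unfolding inner
      by (simp add: sum_list_distinct_conv_sum_set atLeastLessThanSuc_atLeastAtMost del: upt_Suc)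
    finally show ?thesis .
  qed
  finally show ?thesis .
qed

lemma psi_clamp: "mu > 0 \<Longrightarrow> psi r mu = max (-1) (min 1 (r / mu))"
  unfolding psi_def by (auto simp: sgn_if field_simps max_def min_def)

lemma clamp_lip:
  fixes x y :: real
  shows "\<bar>max (-1) (min 1 x) - max (-1) (min 1 y)\<bar> \<le> \<bar>x - y\<bar>"
  by (auto simp: max_def min_def abs_le_iff)

lemma psi_lip:
  assumes "mu > 0"
  shows "\<bar>psi a mu - psi b mu\<bar> \<le> \<bar>a - b\<bar> / mu"
proof -
  have "\<bar>psi a mu - psi b mu\<bar> \<le> \<bar>a / mu - b / mu\<bar>"
    unfolding psi_clamp[OF assms] by (rule clamp_lip)
  also have "\<dots> = \<bar>a - b\<bar> / mu" using assms by (simp add: diff_divide_distrib[symmetric])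
  finally show ?thesis .
qed

lemma psi_mu:
  assumes "0 < mu2" "mu2 \<le> mu1"
  shows "\<bar>psi r mu2 - psi r mu1\<bar> \<le> (mu1 - mu2) / mu2"
proof (cases "\<bar>r\<bar> \<le> mu1")
  case True
  have "\<bar>psi r mu2 - psi r mu1\<bar> \<le> \<bar>r / mu2 - r / mu1\<bar>"
  proof -
    have "mu1 > 0" using assms by simp
    show ?thesis unfolding psi_clamp[OF assms(1)] psi_clamp[OF \<open>mu1 > 0\<close>] by (rule clamp_lip)
  qed
  also have "\<dots> = \<bar>r\<bar> * (mu1 - mu2) / (mu1 * mu2)"
  proof -
    have "r / mu2 - r / mu1 = r * (mu1 - mu2) / (mu1 * mu2)" using assms by (simp add: field_simps)
    moreover have "\<bar>r * (mu1 - mu2) / (mu1 * mu2)\<bar> = \<bar>r\<bar> * (mu1 - mu2) / (mu1 * mu2)"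
      using assms by (simp add: abs_mult abs_divide)
    ultimately show ?thesis by simp
  qed
  also have "\<dots> \<le> mu1 * (mu1 - mu2) / (mu1 * mu2)" using assms True
    by (intro divide_right_mono mult_right_mono) auto
  also have "\<dots> = (mu1 - mu2) / mu2" using assms by simp
  finally show ?thesis .
next
  case False
  then show ?thesis using assms unfolding psi_def by simp
qed


lemma sum_Sigma_pairs:
  "(\<Sum>l\<in>{1..L}. \<Sum>i\<in>{1..M l}. F l i) = (\<Sum>p\<in>Sigma {1..L::nat} (\<lambda>l. {1..M l::nat}). F (fst p) (snd p))"
  by (subst sum.Sigma) (auto simp: split_beta)

theorem lemma4:
  fixes L :: nat and M :: "nat \<Rightarrow> nat"
    and y :: "nat \<Rightarrow> nat \<Rightarrow> real" and xb :: "nat \<Rightarrow> nat \<Rightarrow> real ^ 'd"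
    and ic :: 'd and tau lam gam c beta d :: real
    and g :: "real \<Rightarrow> real" and w :: "nat \<Rightarrow> real ^ 'd"
    and mu sigma :: "nat \<Rightarrow> real" and n :: nat and k :: nat
  assumes intercept: "\<And>l i. l \<in> {1..L} \<Longrightarrow> i \<in> {1..M l} \<Longrightarrow> xb l i $ ic = 1"
    and n_def: "n = (\<Sum>l\<in>{1..L}. M l)"
    and tau: "0 < tau" "tau < 1"
    and lam: "lam > 0"
    and pen: "(gam \<ge> 1 \<and> g = mcp lam gam) \<or> (gam \<ge> 2 \<and> g = scad lam gam)"
    and params: "c > 0" "beta > 0" "0 < d" "d < 1"
    and sigma_def: "\<And>j. j \<ge> 1 \<Longrightarrow> sigma j = c * real j powr d"
    and mu_def: "\<And>j. j \<ge> 1 \<Longrightarrow> mu j = beta / real j powr d"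
    and step: "\<And>j v. (\<Sum>l\<in>{1..L}. grad (\<lambda>u. gtil M y xb tau l u (mu (j+1))) (w j) \<bullet> (w (j+1) - w j))
                      + real n * penalty g ic (w (j+1))
                      + sigma (j+1) / 2 * (norm (w (j+1) - w j))\<^sup>2
                 \<le> (\<Sum>l\<in>{1..L}. grad (\<lambda>u. gtil M y xb tau l u (mu (j+1))) (w j) \<bullet> (v - w j))
                      + real n * penalty g ic v
                      + sigma (j+1) / 2 * (norm (v - w j))\<^sup>2"
  shows "norm (grad (\<lambda>u. \<Sum>l\<in>{1..L}. gtil M y xb tau l u (mu (k+2))) (w (k+1))
               - grad (\<lambda>u. \<Sum>l\<in>{1..L}. gtil M y xb tau l u (mu (k+1))) (w k))
         \<le> lambda_max n (gram L M xb) / (2 * mu (k+1)) * norm (w (k+1) - w k)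
           + real n * sqrt (lambda_max n (gram L M xb)) / 2 * ((mu (k+1) - mu (k+2)) / mu (k+2))"
proof -
  define mu1 where "mu1 = mu (k+1)"
  define mu2 where "mu2 = mu (k+2)"
  define LM where "LM = lambda_max n (gram L M xb)"
  define Dl where "Dl = w (k+1) - w k"
  define I where "I = Sigma {1..L} (\<lambda>l. {1..M l})"
  define X where "X p = xb (fst p) (snd p)" for p
  define Y where "Y p = y (fst p) (snd p)" for p
  have finI: "finite I" unfolding I_def by auto
  have cardI: "card I = n" unfolding I_def n_def by simp
  have pk1: "real (k+1) powr d > 0" "real (k+2) powr d > 0" by auto
  have mu1: "mu1 = beta / real (k+1) powr d" unfolding mu1_def by (rule mu_def) simp
  have mu2: "mu2 = beta / real (k+2) powr d" unfolding mu2_def by (rule mu_def) simp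
  have mu1p: "mu1 > 0" using mu1 params pk1 by simp
  have mu2p: "mu2 > 0" using mu2 params pk1 by simp
  have mu21: "mu2 \<le> mu1"
  proof -
    have "real (k+1) powr d \<le> real (k+2) powr d" using params by (intro powr_mono2) auto
    then show ?thesis unfolding mu1 mu2 using params pk1 by (intro divide_left_mono) auto
  qed
  have sig: "sigma (k+1) > 0" using sigma_def[of "k+1"] params by simp
  have Gsum: "(\<Sum>l\<in>{1..L}. Gl M y xb tau l u mu) =
      (\<Sum>p\<in>I. (-(1/2) * psi (Y p - X p \<bullet> u) mu - (tau - 1/2)) *\<^sub>R X p)" for u mu
    unfolding Gl_def I_def X_def Y_def by (rule sum_Sigma_pairs)
  have lhs: "grad (\<lambda>u. \<Sum>l\<in>{1..L}. gtil M y xb tau l u (mu (k+2))) (w (k+1))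
               - grad (\<lambda>u. \<Sum>l\<in>{1..L}. gtil M y xb tau l u (mu (k+1))) (w k)
      = (\<Sum>l\<in>{1..L}. Gl M y xb tau l (w (k+1)) mu2) - (\<Sum>l\<in>{1..L}. Gl M y xb tau l (w k) mu1)"
    unfolding mu1_def[symmetric] mu2_def[symmetric]
    by (simp only: grad_sum_gtil[OF mu1p] grad_sum_gtil[OF mu2p])
  show ?thesis
  proof (cases "n = 0")
    case True
    have M0: "M l = 0" if "l \<in> {1..L}" for l using True that unfolding n_def by simp
    have G0: "Gl M y xb tau l u mu = 0" if "l \<in> {1..L}" for l u mu
      unfolding Gl_def using M0[OF that] by simp
    have st: "(\<Sum>l\<in>{1..L}. grad (\<lambda>u. gtil M y xb tau l u mu1) (w k) \<bullet> Dl)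
        + real n * penalty g ic (w (k+1)) + sigma (k+1) / 2 * (norm Dl)\<^sup>2
      \<le> (\<Sum>l\<in>{1..L}. grad (\<lambda>u. gtil M y xb tau l u mu1) (w k) \<bullet> (w k - w k))
        + real n * penalty g ic (w k) + sigma (k+1) / 2 * (norm (w k - w k))\<^sup>2"
      using step[of k "w k"] unfolding mu1_def Dl_def .
    have gg: "grad (\<lambda>u. gtil M y xb tau l u mu1) (w k) = Gl M y xb tau l (w k) mu1" for l
      by (rule grad_gtil[OF mu1p])
    have "(\<Sum>l\<in>{1..L}. grad (\<lambda>u. gtil M y xb tau l u mu1) (w k) \<bullet> Dl) = 0"
      unfolding gg using G0 by simp
    then have "sigma (k+1) / 2 * (norm Dl)\<^sup>2 \<le> 0"
      using st True by simp
    then have "norm Dl = 0" using sig by (simp add: mult_le_0_iff)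
    moreover have "(\<Sum>l\<in>{1..L}. Gl M y xb tau l u mu) = 0" for u mu using G0 by simp
    ultimately show ?thesis unfolding lhs using True Dl_def by simp
  next
    case False
    then have n1: "n \<ge> 1" by simp
    obtain v m where nv: "norm v = 1" and ev: "(\<Sum>p\<in>I. (X p \<bullet> v) *\<^sub>R X p) = m *\<^sub>R v"
      and mq: "\<And>z. (\<Sum>p\<in>I. (X p \<bullet> z)\<^sup>2) \<le> m * (norm z)\<^sup>2"
      using rayleigh_max[OF finI, of X] by blast
    have m0: "m \<ge> 0"
    proof -
      have "m = (m *\<^sub>R v) \<bullet> v" using nv by (simp add: power2_norm_eq_inner[symmetric])
      also have "\<dots> = (\<Sum>p\<in>I. (X p \<bullet> v)\<^sup>2)" unfolding ev[symmetric]
        by (simp add: inner_sum_left power2_eq_square)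
      also have "\<dots> \<ge> 0" by (intro sum_nonneg) auto
      finally show ?thesis .
    qed
    have len: "length (samples L M xb) = n"
      using samples_sum[of "\<lambda>_. (1::nat)" L M xb] unfolding n_def by simp
    have mLM: "m \<le> LM"
    proof -
      have "m \<le> lambda_max (length (samples L M xb)) (\<lambda>i j. samples L M xb ! i \<bullet> samples L M xb ! j)"
      proof (rule lam_ge)
        show "1 \<le> length (samples L M xb)" using len n1 by simp
        show "(\<Sum>j<length (samples L M xb). (samples L M xb ! j \<bullet> z)\<^sup>2) \<le> m * (norm z)\<^sup>2" for z
        proof -
          have "(\<Sum>j<length (samples L M xb). (samples L M xb ! j \<bullet> z)\<^sup>2) = (\<Sum>p\<in>I. (X p \<bullet> z)\<^sup>2)"
            unfolding I_def X_def
            using samples_sum[of "\<lambda>x. (x \<bullet> z)\<^sup>2" L M xb] sum_Sigma_pairs[where L=L and M=M and F="\<lambda>l i. (xb l i \<bullet> z)\<^sup>2"]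
            by simp
          then show ?thesis using mq[of z] by simp
        qed
        show "(\<Sum>j<length (samples L M xb). (samples L M xb ! j \<bullet> v) *\<^sub>R samples L M xb ! j) = m *\<^sub>R v"
        proof -
          have "(\<Sum>j<length (samples L M xb). (samples L M xb ! j \<bullet> v) *\<^sub>R samples L M xb ! j) = (\<Sum>p\<in>I. (X p \<bullet> v) *\<^sub>R X p)"
            unfolding I_def X_def
            using samples_sum[of "\<lambda>x. (x \<bullet> v) *\<^sub>R x" L M xb] sum_Sigma_pairs[where L=L and M=M and F="\<lambda>l i. (xb l i \<bullet> v) *\<^sub>R xb l i"]
            by simp
          then show ?thesis using ev by simp
        qed
      qed (rule nv)
      moreover have "(\<lambda>i j. samples L M xb ! i \<bullet> samples L M xb ! j) = gram L M xb"
        by (intro ext) (simp add: gram_def)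
      ultimately show ?thesis unfolding LM_def len by simp
    qed
    define a where "a p = Y p - X p \<bullet> w k" for p
    define b where "b p = Y p - X p \<bullet> w (k+1)" for p
    define e where "e p = psi (b p) mu2 - psi (b p) mu1" for p
    define dd where "dd p = psi (b p) mu1 - psi (a p) mu1" for p
    define E0 where "E0 = (mu1 - mu2) / mu2"
    have diff: "(\<Sum>l\<in>{1..L}. Gl M y xb tau l (w (k+1)) mu2) - (\<Sum>l\<in>{1..L}. Gl M y xb tau l (w k) mu1)
        = (-(1/2)) *\<^sub>R ((\<Sum>p\<in>I. e p *\<^sub>R X p) + (\<Sum>p\<in>I. dd p *\<^sub>R X p))"
      unfolding Gsum
      by (simp add: sum_subtractf[symmetric] sum.distrib[symmetric] scaleR_sum_right a_def b_def e_def dd_def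
          algebra_simps)
    have bd: "norm (\<Sum>p\<in>I. dd p *\<^sub>R X p) \<le> m * norm Dl / mu1"
    proof -
      have dp: "(dd p)\<^sup>2 \<le> (X p \<bullet> Dl)\<^sup>2 / mu1\<^sup>2" for p
      proof -
        have "\<bar>dd p\<bar> \<le> \<bar>b p - a p\<bar> / mu1" unfolding dd_def by (rule psi_lip[OF mu1p])
        also have "b p - a p = - (X p \<bullet> Dl)" unfolding a_def b_def Dl_def by (simp add: inner_diff_right)
        finally have "\<bar>dd p\<bar> \<le> \<bar>X p \<bullet> Dl\<bar> / mu1" by simp
        then have "\<bar>dd p\<bar>\<^sup>2 \<le> (\<bar>X p \<bullet> Dl\<bar> / mu1)\<^sup>2" by (intro power_mono) auto
        then show ?thesis by (simp add: power_divide)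
      qed
      have "(\<Sum>p\<in>I. (dd p)\<^sup>2) \<le> (\<Sum>p\<in>I. (X p \<bullet> Dl)\<^sup>2) / mu1\<^sup>2"
        unfolding sum_divide_distrib by (rule sum_mono) (rule dp)
      also have "\<dots> \<le> m * (norm Dl)\<^sup>2 / mu1\<^sup>2" using mq[of Dl] mu1p by (intro divide_right_mono) auto
      finally have "sqrt (\<Sum>p\<in>I. (dd p)\<^sup>2) \<le> sqrt (m * (norm Dl)\<^sup>2 / mu1\<^sup>2)" by simp
      also have "\<dots> = sqrt m * norm Dl / mu1" using mu1p m0 by (simp add: real_sqrt_mult real_sqrt_divide)
      finally have s: "sqrt (\<Sum>p\<in>I. (dd p)\<^sup>2) \<le> sqrt m * norm Dl / mu1" .
      have "norm (\<Sum>p\<in>I. dd p *\<^sub>R X p) \<le> sqrt m * sqrt (\<Sum>p\<in>I. (dd p)\<^sup>2)"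
        by (rule norm_comb_bound[OF finI mq])
      also have "\<dots> \<le> sqrt m * (sqrt m * norm Dl / mu1)" using m0 by (intro mult_left_mono s) auto
      also have "\<dots> = m * norm Dl / mu1" using m0 by (simp add: real_sqrt_mult[symmetric])
      finally show ?thesis .
    qed
    have be: "norm (\<Sum>p\<in>I. e p *\<^sub>R X p) \<le> sqrt m * (real n * E0)"
    proof -
      have E0: "E0 \<ge> 0" unfolding E0_def using mu21 mu2p by simp
      have "(e p)\<^sup>2 \<le> E0\<^sup>2" for p
      proof -
        have "\<bar>e p\<bar> \<le> E0" unfolding e_def E0_def by (rule psi_mu[OF mu2p mu21])
        then have "\<bar>e p\<bar>\<^sup>2 \<le> E0\<^sup>2" by (intro power_mono) auto
        then show ?thesis by simp
      qed
      then have "(\<Sum>p\<in>I. (e p)\<^sup>2) \<le> real n * E0\<^sup>2"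
        using sum_mono[of I "\<lambda>p. (e p)\<^sup>2" "\<lambda>p. E0\<^sup>2"] cardI by simp
      then have "sqrt (\<Sum>p\<in>I. (e p)\<^sup>2) \<le> sqrt (real n) * E0"
        using E0 by (metis real_sqrt_le_mono real_sqrt_mult real_sqrt_abs abs_of_nonneg)
      also have "\<dots> \<le> real n * E0"
      proof -
        have "sqrt (real n) \<le> real n"
        proof -
          have "1 \<le> sqrt (real n)" using n1 by simp
          then have "sqrt (real n) * 1 \<le> sqrt (real n) * sqrt (real n)" by (intro mult_left_mono) auto
          then show ?thesis by simp
        qed
        then show ?thesis using E0 by (intro mult_right_mono) auto
      qed
      finally have s: "sqrt (\<Sum>p\<in>I. (e p)\<^sup>2) \<le> real n * E0" .
      have "norm (\<Sum>p\<in>I. e p *\<^sub>R X p) \<le> sqrt m * sqrt (\<Sum>p\<in>I. (e p)\<^sup>2)"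
        by (rule norm_comb_bound[OF finI mq])
      also have "\<dots> \<le> sqrt m * (real n * E0)" using m0 by (intro mult_left_mono s) auto
      finally show ?thesis .
    qed
    have "norm ((-(1/2::real)) *\<^sub>R ((\<Sum>p\<in>I. e p *\<^sub>R X p) + (\<Sum>p\<in>I. dd p *\<^sub>R X p)))
        \<le> (1/2) * (norm (\<Sum>p\<in>I. e p *\<^sub>R X p) + norm (\<Sum>p\<in>I. dd p *\<^sub>R X p))"
      by (simp add: norm_triangle_ineq)
    also have "\<dots> \<le> (1/2) * (sqrt m * (real n * E0) + m * norm Dl / mu1)"
      by (intro mult_left_mono add_mono be bd) auto
    also have "\<dots> \<le> (1/2) * (sqrt LM * (real n * E0) + LM * norm Dl / mu1)"
    proof -
      have E0: "E0 \<ge> 0" unfolding E0_def using mu21 mu2p by simp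
      have "sqrt m * (real n * E0) \<le> sqrt LM * (real n * E0)"
        using mLM E0 by (intro mult_right_mono) auto
      moreover have "m * norm Dl / mu1 \<le> LM * norm Dl / mu1"
        using mLM mu1p by (intro divide_right_mono mult_right_mono) auto
      ultimately show ?thesis by (intro mult_left_mono add_mono) auto
    qed
    also have "\<dots> = LM / (2 * mu1) * norm Dl + real n * sqrt LM / 2 * E0"
      by (simp add: field_simps)
    finally have fin: "norm ((-(1/2::real)) *\<^sub>R ((\<Sum>p\<in>I. e p *\<^sub>R X p) + (\<Sum>p\<in>I. dd p *\<^sub>R X p)))
        \<le> LM / (2 * mu1) * norm Dl + real n * sqrt LM / 2 * E0" .
    have eqL: "grad (\<lambda>u. \<Sum>l\<in>{1..L}. gtil M y xb tau l u (mu (k+2))) (w (k+1))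
               - grad (\<lambda>u. \<Sum>l\<in>{1..L}. gtil M y xb tau l u (mu (k+1))) (w k)
        = (-(1/2::real)) *\<^sub>R ((\<Sum>p\<in>I. e p *\<^sub>R X p) + (\<Sum>p\<in>I. dd p *\<^sub>R X p))"
      using lhs diff by simp
    show ?thesis unfolding eqL using fin unfolding LM_def E0_def Dl_def mu1_def mu2_def .
  qed
qed

end
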